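(* Let $\varepsilon$ be as in the context and let $(a,b,c)$ be a solution of $$2a'/a=-a^2+c^2,\qquad 2b'/b=a^2+c^2,\qquad 2c'/c=a^2-c^2+2(ab)^2+2\varepsilon(b)a^2$$ with $a,b,c>0$, on its maximal interval $(\xi,\eta)$, and fix $t_0\in(\xi,\eta)$. Then exactly one of the following holds: (1) $\xi$ is finite and $\int_\xi^{t_0}abc\,dt<\infty$ (so the associated metric $g=(abc)^2dt^2+a^2\sigma_1^2+b^2\sigma_2^2+c^2\sigma_3^2$ is not complete at that end); or (2) $\xi=-\infty$, $0\le c^2-a^2\le 2a^2(b^2+\varepsilon(b))$ on all of $(\xi,\eta)$, and $(a,b,c)\to(q,0,q)$ as $t\to-\infty$ for some $q>0$. In particular, the solutions with maximal interval of the form $(-\infty,\eta)$ are exactly the unstable curves of the equilibrium points $(q,0,q)$, $q>0$.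
   Context: $\varepsilon:[0,\infty)\to\mathbb R$ is a $C^\infty$ function with (i) $\varepsilon(0)=0$ and $\varepsilon\ge0$; (ii) $\varepsilon'(0)=0$ and $\varepsilon'(b)>-2b$ for all $b$; (iii) $\varepsilon$ extends smoothly to an even function on $\mathbb R$. The prime denotes $d/dt$. $\sigma_1,\sigma_2,\sigma_3$ are the left-invariant 1-forms dual to a basis $X_1,X_2,X_3$ of the Lie algebra of $E(2)$ with $[X_1,X_2]=-X_3$, $[X_2,X_3]=-X_1$, $[X_3,X_1]=0$. *)

theory Defs
  imports "HOL-Analysis.Analysis"
begin

definition smooth_real :: "(real \<Rightarrow> real) \<Rightarrow> bool" where
  "smooth_real f \<longleftrightarrow> (\<exists>D :: nat \<Rightarrow> real \<Rightarrow> real. D 0 = f \<and>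
      (\<forall>n x. (D n has_real_derivative D (Suc n) x) (at x)))"

text \<open>Standing hypotheses on epsilon. The function is taken to be its smooth even
  extension to the real line (condition (iii)); only its values on [0,inf) matter.\<close>
definition admissible_eps :: "(real \<Rightarrow> real) \<Rightarrow> bool" where
  "admissible_eps \<epsilon> \<longleftrightarrow> smooth_real \<epsilon> \<and> (\<forall>x. \<epsilon> (- x) = \<epsilon> x) \<and>
      \<epsilon> 0 = 0 \<and> (\<forall>x\<ge>0. \<epsilon> x \<ge> 0) \<and>
      deriv \<epsilon> 0 = 0 \<and> (\<forall>b>0. deriv \<epsilon> b > - 2 * b)"

definition is_sol :: "(real \<Rightarrow> real) \<Rightarrow> (real \<Rightarrow> real) \<Rightarrow> (real \<Rightarrow> real) \<Rightarrow> (real \<Rightarrow> real)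
    \<Rightarrow> real set \<Rightarrow> bool" where
  "is_sol \<epsilon> a b c I \<longleftrightarrow> (\<forall>t\<in>I. a t > 0 \<and> b t > 0 \<and> c t > 0 \<and>
      (a has_real_derivative a t * (- (a t)\<^sup>2 + (c t)\<^sup>2) / 2) (at t) \<and>
      (b has_real_derivative b t * ((a t)\<^sup>2 + (c t)\<^sup>2) / 2) (at t) \<and>
      (c has_real_derivative c t * ((a t)\<^sup>2 - (c t)\<^sup>2 + 2 * (a t * b t)\<^sup>2
          + 2 * \<epsilon> (b t) * (a t)\<^sup>2) / 2) (at t))"

definition eint :: "ereal \<Rightarrow> ereal \<Rightarrow> real set" where
  "eint \<xi> \<eta> = {t. \<xi> < ereal t \<and> ereal t < \<eta>}"

definition maximal_sol :: "(real \<Rightarrow> real) \<Rightarrow> (real \<Rightarrow> real) \<Rightarrow> (real \<Rightarrow> real) \<Rightarrow> (real \<Rightarrow> real)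
    \<Rightarrow> ereal \<Rightarrow> ereal \<Rightarrow> bool" where
  "maximal_sol \<epsilon> a b c \<xi> \<eta> \<longleftrightarrow> \<xi> < \<eta> \<and> is_sol \<epsilon> a b c (eint \<xi> \<eta>) \<and>
     \<not> (\<exists>J a2 b2 c2. open J \<and> is_interval J \<and> eint \<xi> \<eta> \<subset> J \<and> is_sol \<epsilon> a2 b2 c2 J \<and>
          (\<forall>t\<in>eint \<xi> \<eta>. a2 t = a t \<and> b2 t = b t \<and> c2 t = c t))"

end

theory Submission
  imports Defs
begin


lemma neg_stays:
  fixes w w' :: "real \<Rightarrow> real"
  assumes tt: "t \<le> t1" and d: "\<And>x. t \<le> x \<Longrightarrow> x \<le> t1 \<Longrightarrow> (w has_real_derivative w' x) (at x)"
    and p: "\<And>x. t \<le> x \<Longrightarrow> x \<le> t1 \<Longrightarrow> w x < 0 \<Longrightarrow> w' x > 0" and w1: "w t1 < 0"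
  shows "w t < 0"
proof -
  have cont: "continuous_on {t..t1} w"
    by (rule continuous_at_imp_continuous_on) (meson DERIV_isCont d atLeastAtMost_iff)
  obtain p0 where p0: "t \<le> p0" "p0 \<le> t1" "\<forall>x\<in>{t..t1}. w p0 \<le> w x"
    using continuous_attains_inf[OF compact_Icc _ cont] tt by auto
  have wp: "w p0 < 0" using p0(3) tt w1 by force
  show ?thesis
  proof (cases "p0 = t")
    case True thus ?thesis using wp by simp
  next
    case False
    hence tp: "t < p0" using p0 by simp
    show ?thesis
    proof (cases "p0 = t1")
      case True
      obtain dd where dd: "dd > 0" "\<forall>h>0. h < dd \<longrightarrow> w (p0 - h) < w p0"
        using DERIV_pos_inc_left[OF d[of p0] p[of p0]] p0 wp by auto
      define h where "h = min (dd/2) ((p0 - t)/2)"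
      have "h > 0" "h < dd" "h \<le> (p0 - t)/2" using dd tp unfolding h_def by (simp_all add: min_def)
      hence "w (p0 - h) < w p0" "p0 - h \<in> {t..t1}" using dd p0 by auto
      thus ?thesis using p0(3) by force
    next
      case False
      hence pt: "p0 < t1" using p0 by simp
      have "w' p0 = 0"
      proof (rule DERIV_local_min[OF d[of p0]])
        show "t \<le> p0" "p0 \<le> t1" using p0 by auto
        show "0 < min (p0 - t) (t1 - p0)" using tp pt by simp
        show "\<forall>y. \<bar>p0 - y\<bar> < min (p0 - t) (t1 - p0) \<longrightarrow> w p0 \<le> w y"
          using p0(3) by (auto simp: abs_if split: if_splits)
      qed
      moreover have "w' p0 > 0" using p[of p0] p0 wp by auto
      ultimately show ?thesis by simp
    qed
  qed
qed

lemma deriv_lower: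
  fixes g g' :: "real \<Rightarrow> real"
  assumes tt: "t \<le> t1" and d: "\<And>x. t \<le> x \<Longrightarrow> x \<le> t1 \<Longrightarrow> (g has_real_derivative g' x) (at x)"
    and k: "\<And>x. t \<le> x \<Longrightarrow> x \<le> t1 \<Longrightarrow> g' x \<ge> \<kappa>"
  shows "g t1 - g t \<ge> \<kappa> * (t1 - t)"
proof -
  have "(\<lambda>x. g x - \<kappa> * x) t \<le> (\<lambda>x. g x - \<kappa> * x) t1"
  proof (rule DERIV_nonneg_imp_nondecreasing[OF tt])
    fix x assume "t \<le> x" "x \<le> t1"
    thus "\<exists>y. ((\<lambda>x. g x - \<kappa> * x) has_real_derivative y) (at x) \<and> 0 \<le> y"
      using d k by (intro exI[of _ "g' x - \<kappa>"]) (auto intro!: derivative_eq_intros)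
  qed
  thus ?thesis by (simp add: algebra_simps)
qed

lemma no_blowup:
  fixes y y' :: "real \<Rightarrow> real"
  assumes d: "\<And>x. x \<le> t1 \<Longrightarrow> (y has_real_derivative y' x) (at x)"
    and k: "\<And>x. x \<le> t1 \<Longrightarrow> y' x \<ge> \<kappa>" and kp: "\<kappa> > 0" and pos: "\<And>x. x \<le> t1 \<Longrightarrow> y x > 0"
  shows False
proof -
  define t where "t = t1 - y t1 / \<kappa> - 1"
  have "y t1 / \<kappa> \<ge> 0" using pos[of t1] kp by simp
  hence tt: "t \<le> t1" by (simp add: t_def)
  have "y t1 - y t \<ge> \<kappa> * (t1 - t)"
    by (rule deriv_lower[OF tt]) (use d k tt in auto)
  also have "\<kappa> * (t1 - t) = y t1 + \<kappa>" using kp by (simp add: t_def field_simps)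
  finally have "y t \<le> - \<kappa>" by simp
  thus False using pos[of t] tt kp by simp
qed

lemma eps_quad:
  assumes adm: "admissible_eps \<epsilon>" and B: "B \<ge> 0"
  shows "\<exists>M\<ge>0. \<forall>x\<in>{0..B}. \<epsilon> x \<le> M * x\<^sup>2"
proof -
  obtain D where D0: "D 0 = \<epsilon>" and DS: "\<And>n x. (D n has_real_derivative D (Suc n) x) (at x)"
    using adm unfolding admissible_eps_def smooth_real_def by blast
  have e0: "\<epsilon> 0 = 0" and de0: "deriv \<epsilon> 0 = 0" using adm unfolding admissible_eps_def by auto
  have D10: "D 1 0 = 0" using DERIV_imp_deriv[OF DS[of 0 0]] D0 de0 by simp
  have "continuous_on {0..B} (D 2)"
    by (rule continuous_at_imp_continuous_on) (auto intro: DERIV_isCont DS)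
  then obtain K where K: "\<forall>x\<in>{0..B}. norm (D 2 x) \<le> K"
    using compact_Icc compact_imp_bounded compact_continuous_image bounded_iff by (metis image_eqI)
  show ?thesis
  proof (intro exI[of _ "max 0 (K/2)"] conjI ballI)
    fix x assume x: "x \<in> {0..B}"
    show "\<epsilon> x \<le> max 0 (K/2) * x\<^sup>2"
    proof (cases "x = 0")
      case True thus ?thesis using e0 by simp
    next
      case False
      hence xp: "0 < x" using x by simp
      obtain s where s: "0 < s" "s < x" "\<epsilon> x = (\<Sum>m<2. D m 0 / fact m * x ^ m) + D 2 s / fact 2 * x ^ 2"
        using Maclaurin[OF xp, of 2 D \<epsilon>] D0 DS by auto
      have "\<epsilon> x = D 2 s / 2 * x^2" using s(3) D0 e0 D10 by (simp add: eval_nat_numeral)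
      also have "\<dots> \<le> K / 2 * x^2"
        using K[rule_format, of s] s x by (intro mult_right_mono) auto
      also have "\<dots> \<le> max 0 (K/2) * x^2" by (intro mult_right_mono) auto
      finally show ?thesis .
    qed
  qed simp
qed



lemma case_fin:
  fixes \<epsilon> a b c :: "real \<Rightarrow> real"
  assumes sol: "is_sol \<epsilon> a b c (eint (ereal x0) \<eta>)" and t0: "t0 \<in> eint (ereal x0) \<eta>"
  shows "(\<integral>\<^sup>+ t \<in> {x0<..t0}. ennreal (a t * b t * c t) \<partial>lborel) < \<infinity>"
proof -
  have t0': "ereal x0 < ereal t0" "ereal t0 < \<eta>" using t0 by (auto simp: eint_def)
  obtain e where e: "ereal t0 < e" "e < \<eta>" using dense t0'(2) by blast
  have ef: "\<bar>e\<bar> \<noteq> \<infinity>" using e by auto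
  define t1 where "t1 = real_of_ereal e"
  have et1: "ereal t1 = e" using ef by (simp add: t1_def ereal_real')
  have tt: "x0 < t0" "t0 < t1" using t0' e et1 by auto
  have inE: "\<And>x. x0 < x \<Longrightarrow> x \<le> t1 \<Longrightarrow> x \<in> eint (ereal x0) \<eta>"
    using e et1 by (auto simp: eint_def) (metis ereal_less_eq(3) le_less_trans)
  have pa: "\<And>x. x0 < x \<Longrightarrow> x \<le> t1 \<Longrightarrow> a x > 0" and pb: "\<And>x. x0 < x \<Longrightarrow> x \<le> t1 \<Longrightarrow> b x > 0"
    and pc: "\<And>x. x0 < x \<Longrightarrow> x \<le> t1 \<Longrightarrow> c x > 0"
    and a_cont: "\<And>x. x0 < x \<Longrightarrow> x \<le> t1 \<Longrightarrow> isCont a x"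
    and c_cont: "\<And>x. x0 < x \<Longrightarrow> x \<le> t1 \<Longrightarrow> isCont c x"
    and db: "\<And>x. x0 < x \<Longrightarrow> x \<le> t1 \<Longrightarrow> (b has_real_derivative b x * ((a x)\<^sup>2 + (c x)\<^sup>2) / 2) (at x)"
    using sol inE unfolding is_sol_def by (blast intro: DERIV_isCont)+
  have b_cont: "\<And>x. x0 < x \<Longrightarrow> x \<le> t1 \<Longrightarrow> isCont b x" using db by (blast intro: DERIV_isCont)
  define f where "f x = b x * ((a x)\<^sup>2 + (c x)\<^sup>2) / 2" for x
  have bmono: "b s \<le> b s'" if "x0 < s" "s \<le> s'" "s' \<le> t1" for s s'
  proof -
    have "0 * (s' - s) \<le> b s' - b s"
    proof (rule deriv_lower[of s s' b "\<lambda>x. b x * ((a x)\<^sup>2 + (c x)\<^sup>2) / 2" 0])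
      fix x assume "s \<le> x" "x \<le> s'"
      hence x: "x0 < x" "x \<le> t1" using that by auto
      show "(b has_real_derivative b x * ((a x)\<^sup>2 + (c x)\<^sup>2) / 2) (at x)" using db[OF x] .
      show "0 \<le> b x * ((a x)\<^sup>2 + (c x)\<^sup>2) / 2" using pb[OF x] by simp
    qed (use that in simp)
    thus ?thesis by simp
  qed
  have lim: "(b \<longlongrightarrow> Inf (b ` ({x0<..} \<inter> {x0<..<t1}))) (at_right x0)"
  proof -
    have "(b \<longlongrightarrow> Inf (b ` ({x0<..} \<inter> {x0<..<t1}))) (at x0 within ({x0<..} \<inter> {x0<..<t1}))"
      by (rule Lim_right_bound[where K=0]) (use bmono pb in \<open>auto intro: less_imp_le\<close>)
    moreover have "at x0 within ({x0<..} \<inter> {x0<..<t1}) = at_right x0"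
      by (rule at_within_nhd[where S="{..<t1}"]) (use tt in auto)
    ultimately show ?thesis by simp
  qed
  have limB: "(b \<longlongrightarrow> b t1) (at_left t1)"
    using b_cont[of t1] tt unfolding isCont_def by (auto intro: tendsto_mono[OF at_within_le_at])
  have si: "set_integrable lborel (einterval (ereal x0) (ereal t1)) f"
  proof (rule interval_integral_FTC_nonneg(1)[where F=b])
    show "ereal x0 < ereal t1" using tt by simp
    fix x assume x: "ereal x0 < ereal x" "ereal x < ereal t1"
    show "(b has_real_derivative f x) (at x)" using db x by (simp add: f_def)
    show "isCont f x" using x a_cont b_cont c_cont unfolding f_def by (auto intro!: continuous_intros)
  next
    show "AE x in lborel. ereal x0 < ereal x \<longrightarrow> ereal x < ereal t1 \<longrightarrow> 0 \<le> f x"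
      by (intro AE_I2) (auto simp: f_def intro!: mult_nonneg_nonneg intro: less_imp_le[OF pb])
    show "((b \<circ> real_of_ereal) \<longlongrightarrow> Inf (b ` ({x0<..} \<inter> {x0<..<t1}))) (at_right (ereal x0))"
      using lim by (simp add: ereal_tendsto_simps1)
    show "((b \<circ> real_of_ereal) \<longlongrightarrow> b t1) (at_left (ereal t1))"
      using limB by (simp add: ereal_tendsto_simps1)
  qed
  hence "integrable lborel (\<lambda>x. indicator {x0<..<t1} x *\<^sub>R f x)"
    by (simp add: set_integrable_def)
  hence fin: "(\<integral>\<^sup>+ x. ennreal (indicator {x0<..<t1} x *\<^sub>R f x) \<partial>lborel) \<noteq> \<infinity>" by blast
  have "(\<integral>\<^sup>+ t \<in> {x0<..t0}. ennreal (a t * b t * c t) \<partial>lborel) \<le>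
        (\<integral>\<^sup>+ x. ennreal (indicator {x0<..<t1} x *\<^sub>R f x) \<partial>lborel)"
  proof (rule nn_integral_mono)
    fix x
    show "ennreal (a x * b x * c x) * indicator {x0<..t0} x \<le> ennreal (indicator {x0<..<t1} x *\<^sub>R f x)"
    proof (cases "x \<in> {x0<..t0}")
      case True
      hence x: "x0 < x" "x \<le> t1" "x < t1" using tt by auto
      have "a x * b x * c x \<le> f x"
      proof -
        have "2 * (a x * c x) \<le> (a x)\<^sup>2 + (c x)\<^sup>2" using sum_squares_bound[of "a x" "c x"] by simp
        hence "b x * (2 * (a x * c x)) \<le> b x * ((a x)\<^sup>2 + (c x)\<^sup>2)"
          using pb[OF x(1,2)] by (intro mult_left_mono) auto
        thus ?thesis by (simp add: f_def algebra_simps)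
      qed
      thus ?thesis using True x by (simp add: indicator_def ennreal_leI)
    qed simp
  qed
  thus ?thesis using fin by (simp add: less_top)
qed



lemma case_minf:
  fixes \<epsilon> a b c :: "real \<Rightarrow> real" and \<eta> :: ereal
  assumes adm: "admissible_eps \<epsilon>" and sol: "is_sol \<epsilon> a b c {t. ereal t < \<eta>}" and t0: "ereal t0 < \<eta>"
  shows "(\<forall>t. ereal t < \<eta> \<longrightarrow> 0 \<le> (c t)\<^sup>2 - (a t)\<^sup>2 \<and>
          (c t)\<^sup>2 - (a t)\<^sup>2 \<le> 2 * (a t)\<^sup>2 * ((b t)\<^sup>2 + \<epsilon> (b t))) \<and>
      (\<exists>q>0. (a \<longlongrightarrow> q) at_bot \<and> (b \<longlongrightarrow> 0) at_bot \<and> (c \<longlongrightarrow> q) at_bot)"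
proof -
  obtain D where D0: "D 0 = \<epsilon>" and DS: "\<And>n x. (D n has_real_derivative D (Suc n) x) (at x)"
    using adm unfolding admissible_eps_def smooth_real_def by blast
  define e1 where "e1 = D 1"
  have de: "\<And>x. (\<epsilon> has_real_derivative e1 x) (at x)" using DS[of 0] D0 by (simp add: e1_def)
  have e1pos: "\<And>x. x > 0 \<Longrightarrow> e1 x > - 2 * x"
    using adm DERIV_imp_deriv[OF de] unfolding admissible_eps_def by auto
  have epos: "\<And>x. x \<ge> 0 \<Longrightarrow> \<epsilon> x \<ge> 0" and e0: "\<epsilon> 0 = 0"
    using adm unfolding admissible_eps_def by auto
  have dec: "\<And>f f' x Dx. (f has_real_derivative f') (at x) \<Longrightarrow> Dx = e1 (f x) * f' \<Longrightarrow>
      ((\<lambda>t. \<epsilon> (f t)) has_real_derivative Dx) (at x)"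
    using DERIV_chain2[OF de] by simp
  have inI: "\<And>t t1. t \<le> t1 \<Longrightarrow> ereal t1 < \<eta> \<Longrightarrow> ereal t < \<eta>"
    by (metis ereal_less_eq(3) le_less_trans)
  have pa: "\<And>t. ereal t < \<eta> \<Longrightarrow> a t > 0" and pb: "\<And>t. ereal t < \<eta> \<Longrightarrow> b t > 0"
    and pc: "\<And>t. ereal t < \<eta> \<Longrightarrow> c t > 0"
    and da: "\<And>t. ereal t < \<eta> \<Longrightarrow> (a has_real_derivative a t * (- (a t)\<^sup>2 + (c t)\<^sup>2) / 2) (at t)"
    and db: "\<And>t. ereal t < \<eta> \<Longrightarrow> (b has_real_derivative b t * ((a t)\<^sup>2 + (c t)\<^sup>2) / 2) (at t)"
    and dc: "\<And>t. ereal t < \<eta> \<Longrightarrow> (c has_real_derivative c t * ((a t)\<^sup>2 - (c t)\<^sup>2 + 2 * (a t * b t)\<^sup>2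
          + 2 * \<epsilon> (b t) * (a t)\<^sup>2) / 2) (at t)"
    using sol unfolding is_sol_def by auto
  have Epos: "\<And>t. ereal t < \<eta> \<Longrightarrow> (b t)\<^sup>2 + \<epsilon> (b t) \<ge> 0"
    using epos pb by (simp add: less_imp_le add_nonneg_nonneg)

  have U: "0 \<le> (c t1)\<^sup>2 - (a t1)\<^sup>2" if t1: "ereal t1 < \<eta>" for t1
  proof (rule ccontr)
    assume "\<not> 0 \<le> (c t1)\<^sup>2 - (a t1)\<^sup>2"
    hence neg1: "(c t1)\<^sup>2 - (a t1)\<^sup>2 < 0" by simp
    have uneg: "(c t)\<^sup>2 - (a t)\<^sup>2 < 0" if "t \<le> t1" for t
    proof (rule neg_stays[OF that, where w' = "\<lambda>x. - ((c x)\<^sup>2 - (a x)\<^sup>2) * ((a x)\<^sup>2 + (c x)\<^sup>2)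
          + 2 * (a x)\<^sup>2 * (c x)\<^sup>2 * ((b x)\<^sup>2 + \<epsilon> (b x))"])
      fix x assume x: "t \<le> x" "x \<le> t1"
      hence xI: "ereal x < \<eta>" using inI t1 by blast
      show "((\<lambda>t. (c t)\<^sup>2 - (a t)\<^sup>2) has_real_derivative - ((c x)\<^sup>2 - (a x)\<^sup>2) * ((a x)\<^sup>2 + (c x)\<^sup>2)
          + 2 * (a x)\<^sup>2 * (c x)\<^sup>2 * ((b x)\<^sup>2 + \<epsilon> (b x))) (at x)"
        by (rule derivative_eq_intros da[OF xI] dc[OF xI] refl)+ (simp add: power2_eq_square; algebra)
      assume u: "(c x)\<^sup>2 - (a x)\<^sup>2 < 0"
      have "0 < - ((c x)\<^sup>2 - (a x)\<^sup>2) * ((a x)\<^sup>2 + (c x)\<^sup>2)"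
        using u pa[OF xI] by (intro mult_pos_pos) (auto intro: add_pos_nonneg)
      moreover have "0 \<le> 2 * (a x)\<^sup>2 * (c x)\<^sup>2 * ((b x)\<^sup>2 + \<epsilon> (b x))"
        using Epos[OF xI] by simp
      ultimately show "0 < - ((c x)\<^sup>2 - (a x)\<^sup>2) * ((a x)\<^sup>2 + (c x)\<^sup>2)
          + 2 * (a x)\<^sup>2 * (c x)\<^sup>2 * ((b x)\<^sup>2 + \<epsilon> (b x))" by simp
    qed (use neg1 in auto)
    have amono: "a t1 \<le> a t" if "t \<le> t1" for t
    proof -
      have "0 * (t1 - t) \<le> (- a t1) - (- a t)"
      proof (rule deriv_lower[OF that, of "\<lambda>x. - a x" "\<lambda>x. - (a x * (- (a x)\<^sup>2 + (c x)\<^sup>2) / 2)"])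
        fix x assume x: "t \<le> x" "x \<le> t1"
        hence xI: "ereal x < \<eta>" using inI t1 by blast
        show "((\<lambda>x. - a x) has_real_derivative - (a x * (- (a x)\<^sup>2 + (c x)\<^sup>2) / 2)) (at x)"
          by (rule derivative_eq_intros da[OF xI] refl)+
        have "a x * ((c x)\<^sup>2 - (a x)\<^sup>2) \<le> 0" using uneg[OF x(2)] pa[OF xI]
          by (intro mult_nonneg_nonpos) auto
        thus "0 \<le> - (a x * (- (a x)\<^sup>2 + (c x)\<^sup>2) / 2)" by simp
      qed
      thus ?thesis by simp
    qed
    have cmono: "c t \<le> c t1" if "t \<le> t1" for t
    proof -
      have "0 * (t1 - t) \<le> c t1 - c t"
      proof (rule deriv_lower[OF that, of c "\<lambda>x. c x * ((a x)\<^sup>2 - (c x)\<^sup>2 + 2 * (a x * b x)\<^sup>2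
          + 2 * \<epsilon> (b x) * (a x)\<^sup>2) / 2"])
        fix x assume x: "t \<le> x" "x \<le> t1"
        hence xI: "ereal x < \<eta>" using inI t1 by blast
        show "(c has_real_derivative c x * ((a x)\<^sup>2 - (c x)\<^sup>2 + 2 * (a x * b x)\<^sup>2
          + 2 * \<epsilon> (b x) * (a x)\<^sup>2) / 2) (at x)" using dc[OF xI] .
        have "0 \<le> (a x)\<^sup>2 - (c x)\<^sup>2 + 2 * (a x * b x)\<^sup>2 + 2 * \<epsilon> (b x) * (a x)\<^sup>2"
          using uneg[OF x(2)] epos[of "b x"] pb[OF xI] by simp
        thus "0 \<le> c x * ((a x)\<^sup>2 - (c x)\<^sup>2 + 2 * (a x * b x)\<^sup>2
          + 2 * \<epsilon> (b x) * (a x)\<^sup>2) / 2" using pc[OF xI] by simp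
      qed
      thus ?thesis by simp
    qed
    define \<kappa> where "\<kappa> = 1 - (c t1)\<^sup>2 / (a t1)\<^sup>2"
    have kp: "\<kappa> > 0" using neg1 pa[OF t1] by (simp add: \<kappa>_def field_simps)
    show False
    proof (rule no_blowup[of t1 "\<lambda>x. inverse ((a x)\<^sup>2)" "\<lambda>x. 1 - (c x)\<^sup>2 / (a x)\<^sup>2" \<kappa>])
      fix x assume x: "x \<le> t1"
      hence xI: "ereal x < \<eta>" using inI t1 by blast
      have ax: "a x > 0" using pa[OF xI] .
      show "((\<lambda>x. inverse ((a x)\<^sup>2)) has_real_derivative 1 - (c x)\<^sup>2 / (a x)\<^sup>2) (at x)"
      proof (rule DERIV_cong[OF DERIV_inverse_fun])
        show "((\<lambda>x. (a x)\<^sup>2) has_real_derivative 2 * a x * (a x * (- (a x)\<^sup>2 + (c x)\<^sup>2) / 2)) (at x)"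
          by (rule derivative_eq_intros da[OF xI] refl)+ simp
        show "(a x)\<^sup>2 \<noteq> 0" using ax by simp
        show "- (2 * a x * (a x * (- (a x)\<^sup>2 + (c x)\<^sup>2) / 2) * inverse (((a x)\<^sup>2) ^ Suc (Suc 0))) =
            1 - (c x)\<^sup>2 / (a x)\<^sup>2"
          using ax by (simp add: field_simps power2_eq_square)
      qed
      show "0 < inverse ((a x)\<^sup>2)" using ax by simp
      have "(c x)\<^sup>2 \<le> (c t1)\<^sup>2" using cmono[OF x] pc[OF xI] by (intro power_mono) auto
      moreover have "(a t1)\<^sup>2 \<le> (a x)\<^sup>2" using amono[OF x] pa[OF t1] by (intro power_mono) auto
      ultimately have "(c x)\<^sup>2 / (a x)\<^sup>2 \<le> (c t1)\<^sup>2 / (a t1)\<^sup>2"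
        using pa[OF t1] by (intro frac_le) auto
      thus "\<kappa> \<le> 1 - (c x)\<^sup>2 / (a x)\<^sup>2" by (simp add: \<kappa>_def)
    qed (use kp in auto)
  qed

  have V: "(c t1)\<^sup>2 - (a t1)\<^sup>2 \<le> 2 * (a t1)\<^sup>2 * ((b t1)\<^sup>2 + \<epsilon> (b t1))" if t1: "ereal t1 < \<eta>" for t1
  proof (rule ccontr)
    define w where "w x = 2 * (a x)\<^sup>2 * ((b x)\<^sup>2 + \<epsilon> (b x)) - ((c x)\<^sup>2 - (a x)\<^sup>2)" for x
    assume "\<not> ?thesis"
    hence neg1: "w t1 < 0" by (simp add: w_def)
    have wneg: "w t < 0" if "t \<le> t1" for t
    proof (rule neg_stays[OF that, where w' = "\<lambda>x. - w x * ((a x)\<^sup>2 + (c x)\<^sup>2)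
          + 2 * (a x)\<^sup>2 * (c x)\<^sup>2 * ((b x)\<^sup>2 + \<epsilon> (b x))
          + (a x)\<^sup>2 * ((a x)\<^sup>2 + (c x)\<^sup>2) * b x * (2 * b x + e1 (b x))"])
      fix x assume x: "t \<le> x" "x \<le> t1"
      hence xI: "ereal x < \<eta>" using inI t1 by blast
      show "(w has_real_derivative - w x * ((a x)\<^sup>2 + (c x)\<^sup>2)
          + 2 * (a x)\<^sup>2 * (c x)\<^sup>2 * ((b x)\<^sup>2 + \<epsilon> (b x))
          + (a x)\<^sup>2 * ((a x)\<^sup>2 + (c x)\<^sup>2) * b x * (2 * b x + e1 (b x))) (at x)"
        unfolding w_def[abs_def]
        by (rule dec derivative_eq_intros da[OF xI] db[OF xI] dc[OF xI] refl)+ (simp add: power2_eq_square; algebra)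
      assume u: "w x < 0"
      have "0 < - w x * ((a x)\<^sup>2 + (c x)\<^sup>2)"
        using u pa[OF xI] by (intro mult_pos_pos) (auto intro: add_pos_nonneg)
      moreover have "0 \<le> 2 * (a x)\<^sup>2 * (c x)\<^sup>2 * ((b x)\<^sup>2 + \<epsilon> (b x))"
        using Epos[OF xI] by simp
      moreover have "0 \<le> (a x)\<^sup>2 * ((a x)\<^sup>2 + (c x)\<^sup>2) * b x * (2 * b x + e1 (b x))"
        using pb[OF xI] e1pos[of "b x"] by (intro mult_nonneg_nonneg) auto
      ultimately show "0 < - w x * ((a x)\<^sup>2 + (c x)\<^sup>2)
          + 2 * (a x)\<^sup>2 * (c x)\<^sup>2 * ((b x)\<^sup>2 + \<epsilon> (b x))
          + (a x)\<^sup>2 * ((a x)\<^sup>2 + (c x)\<^sup>2) * b x * (2 * b x + e1 (b x))" by simp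
    qed (use neg1 in auto)
    have cmono: "c t1 \<le> c t" if "t \<le> t1" for t
    proof -
      have "0 * (t1 - t) \<le> (- c t1) - (- c t)"
      proof (rule deriv_lower[OF that, of "\<lambda>x. - c x" "\<lambda>x. - (c x * ((a x)\<^sup>2 - (c x)\<^sup>2 + 2 * (a x * b x)\<^sup>2
          + 2 * \<epsilon> (b x) * (a x)\<^sup>2) / 2)"])
        fix x assume x: "t \<le> x" "x \<le> t1"
        hence xI: "ereal x < \<eta>" using inI t1 by blast
        show "((\<lambda>x. - c x) has_real_derivative - (c x * ((a x)\<^sup>2 - (c x)\<^sup>2 + 2 * (a x * b x)\<^sup>2
          + 2 * \<epsilon> (b x) * (a x)\<^sup>2) / 2)) (at x)"
          by (rule derivative_eq_intros dc[OF xI] refl)+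
        have "(a x)\<^sup>2 - (c x)\<^sup>2 + 2 * (a x * b x)\<^sup>2 + 2 * \<epsilon> (b x) * (a x)\<^sup>2 = w x"
          by (simp add: w_def power2_eq_square algebra_simps)
        hence "(a x)\<^sup>2 - (c x)\<^sup>2 + 2 * (a x * b x)\<^sup>2 + 2 * \<epsilon> (b x) * (a x)\<^sup>2 \<le> 0"
          using wneg[OF x(2)] by simp
        hence "c x * ((a x)\<^sup>2 - (c x)\<^sup>2 + 2 * (a x * b x)\<^sup>2 + 2 * \<epsilon> (b x) * (a x)\<^sup>2) \<le> 0"
          using pc[OF xI] by (intro mult_nonneg_nonpos) auto
        thus "0 \<le> - (c x * ((a x)\<^sup>2 - (c x)\<^sup>2 + 2 * (a x * b x)\<^sup>2
          + 2 * \<epsilon> (b x) * (a x)\<^sup>2) / 2)" by simp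
      qed
      thus ?thesis by simp
    qed
    define P where "P x = (a x)\<^sup>2 * (1 + 2 * ((b x)\<^sup>2 + \<epsilon> (b x)))" for x
    have Pmono: "P t \<le> P t1" if "t \<le> t1" for t
    proof -
      have "0 * (t1 - t) \<le> P t1 - P t"
      proof (rule deriv_lower[OF that, of P "\<lambda>x. (a x)\<^sup>2 * ((c x)\<^sup>2 - (a x)\<^sup>2) * (1 + 2 * ((b x)\<^sup>2 + \<epsilon> (b x)))
             + (a x)\<^sup>2 * b x * ((a x)\<^sup>2 + (c x)\<^sup>2) * (2 * b x + e1 (b x))"])
        fix x assume x: "t \<le> x" "x \<le> t1"
        hence xI: "ereal x < \<eta>" using inI t1 by blast
        show "(P has_real_derivative (a x)\<^sup>2 * ((c x)\<^sup>2 - (a x)\<^sup>2) * (1 + 2 * ((b x)\<^sup>2 + \<epsilon> (b x)))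
             + (a x)\<^sup>2 * b x * ((a x)\<^sup>2 + (c x)\<^sup>2) * (2 * b x + e1 (b x))) (at x)"
          unfolding P_def[abs_def]
          by (rule dec derivative_eq_intros da[OF xI] db[OF xI] refl)+ (simp add: power2_eq_square; algebra)
        have "0 \<le> (a x)\<^sup>2 * ((c x)\<^sup>2 - (a x)\<^sup>2) * (1 + 2 * ((b x)\<^sup>2 + \<epsilon> (b x)))"
          using U[OF xI] Epos[OF xI] by (intro mult_nonneg_nonneg) auto
        moreover have "0 \<le> (a x)\<^sup>2 * b x * ((a x)\<^sup>2 + (c x)\<^sup>2) * (2 * b x + e1 (b x))"
          using pb[OF xI] e1pos[of "b x"] by (intro mult_nonneg_nonneg) auto
        ultimately show "0 \<le> (a x)\<^sup>2 * ((c x)\<^sup>2 - (a x)\<^sup>2) * (1 + 2 * ((b x)\<^sup>2 + \<epsilon> (b x)))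
             + (a x)\<^sup>2 * b x * ((a x)\<^sup>2 + (c x)\<^sup>2) * (2 * b x + e1 (b x))" by simp
      qed
      thus ?thesis by simp
    qed
    have P1: "P t1 < (c t1)\<^sup>2" using neg1 by (simp add: w_def P_def algebra_simps)
    define \<kappa> where "\<kappa> = 1 - P t1 / (c t1)\<^sup>2"
    have kp: "\<kappa> > 0" using P1 pc[OF t1] by (simp add: \<kappa>_def field_simps)
    show False
    proof (rule no_blowup[of t1 "\<lambda>x. inverse ((c x)\<^sup>2)" "\<lambda>x. 1 - P x / (c x)\<^sup>2" \<kappa>])
      fix x assume x: "x \<le> t1"
      hence xI: "ereal x < \<eta>" using inI t1 by blast
      have cx: "c x > 0" using pc[OF xI] .
      show "((\<lambda>x. inverse ((c x)\<^sup>2)) has_real_derivative 1 - P x / (c x)\<^sup>2) (at x)"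
      proof (rule DERIV_cong[OF DERIV_inverse_fun])
        show "((\<lambda>x. (c x)\<^sup>2) has_real_derivative 2 * c x * (c x * ((a x)\<^sup>2 - (c x)\<^sup>2 + 2 * (a x * b x)\<^sup>2
          + 2 * \<epsilon> (b x) * (a x)\<^sup>2) / 2)) (at x)"
          by (rule derivative_eq_intros dc[OF xI] refl)+ simp
        show "(c x)\<^sup>2 \<noteq> 0" using cx by simp
        show "- (2 * c x * (c x * ((a x)\<^sup>2 - (c x)\<^sup>2 + 2 * (a x * b x)\<^sup>2
          + 2 * \<epsilon> (b x) * (a x)\<^sup>2) / 2) * inverse (((c x)\<^sup>2) ^ Suc (Suc 0))) =
            1 - P x / (c x)\<^sup>2"
          using cx by (simp add: P_def field_simps power2_eq_square)
      qed
      show "0 < inverse ((c x)\<^sup>2)" using cx by simp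
      have "(c t1)\<^sup>2 \<le> (c x)\<^sup>2" using cmono[OF x] pc[OF t1] by (intro power_mono) auto
      moreover have "P x \<le> P t1" using Pmono[OF x] .
      moreover have "0 \<le> P x" using Epos[OF xI] by (simp add: P_def)
      ultimately have "P x / (c x)\<^sup>2 \<le> P t1 / (c t1)\<^sup>2"
        using pc[OF t1] by (intro frac_le) auto
      thus "\<kappa> \<le> 1 - P x / (c x)\<^sup>2" by (simp add: \<kappa>_def)
    qed (use kp in auto)
  qed

  have bt0: "b t0 > 0" using pb[OF t0] .
  obtain M where M0: "M \<ge> 0" and M: "\<And>x. 0 \<le> x \<Longrightarrow> x \<le> b t0 \<Longrightarrow> \<epsilon> x \<le> M * x\<^sup>2"
    using eps_quad[OF adm, of "b t0"] bt0 by auto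
  have bmono: "b t \<le> b s" if ts: "t \<le> s" and s: "ereal s < \<eta>" for t s
  proof -
    have "0 * (s - t) \<le> b s - b t"
    proof (rule deriv_lower[OF ts, of b "\<lambda>x. b x * ((a x)\<^sup>2 + (c x)\<^sup>2) / 2"])
      fix x assume x: "t \<le> x" "x \<le> s"
      hence xI: "ereal x < \<eta>" using inI s by blast
      show "(b has_real_derivative b x * ((a x)\<^sup>2 + (c x)\<^sup>2) / 2) (at x)" using db[OF xI] .
      show "0 \<le> b x * ((a x)\<^sup>2 + (c x)\<^sup>2) / 2" using pb[OF xI] by simp
    qed
    thus ?thesis by simp
  qed
  have amono: "a t \<le> a s" if ts: "t \<le> s" and s: "ereal s < \<eta>" for t s
  proof -
    have "0 * (s - t) \<le> a s - a t"
    proof (rule deriv_lower[OF ts, of a "\<lambda>x. a x * (- (a x)\<^sup>2 + (c x)\<^sup>2) / 2"])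
      fix x assume x: "t \<le> x" "x \<le> s"
      hence xI: "ereal x < \<eta>" using inI s by blast
      show "(a has_real_derivative a x * (- (a x)\<^sup>2 + (c x)\<^sup>2) / 2) (at x)" using da[OF xI] .
      show "0 \<le> a x * (- (a x)\<^sup>2 + (c x)\<^sup>2) / 2" using pa[OF xI] U[OF xI] by simp
    qed
    thus ?thesis by simp
  qed
  define \<alpha> where "\<alpha> = exp (ln (a t0) - (M + 1) / 2 * (b t0)\<^sup>2)"
  have \<alpha>pos: "\<alpha> > 0" by (simp add: \<alpha>_def)
  have aLow: "\<alpha> \<le> a t" if tt: "t \<le> t0" for t
  proof -
    define h where "h x = (M + 1) / 2 * (b x)\<^sup>2 - ln (a x)" for x
    have "0 * (t0 - t) \<le> h t0 - h t"
    proof (rule deriv_lower[OF tt, of h "\<lambda>x. ((M + 1) * (b x)\<^sup>2 * ((a x)\<^sup>2 + (c x)\<^sup>2) - ((c x)\<^sup>2 - (a x)\<^sup>2)) / 2"])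
      fix x assume x: "t \<le> x" "x \<le> t0"
      hence xI: "ereal x < \<eta>" using inI t0 by blast
      have ax: "a x > 0" using pa[OF xI] .
      show "(h has_real_derivative ((M + 1) * (b x)\<^sup>2 * ((a x)\<^sup>2 + (c x)\<^sup>2) - ((c x)\<^sup>2 - (a x)\<^sup>2)) / 2) (at x)"
      proof -
        have la: "((\<lambda>x. ln (a x)) has_real_derivative (1 / a x) * (a x * (- (a x)\<^sup>2 + (c x)\<^sup>2) / 2)) (at x)"
          by (rule DERIV_chain2[OF DERIV_ln_divide[OF ax] da[OF xI]])
        show ?thesis unfolding h_def[abs_def]
          apply (rule la derivative_eq_intros db[OF xI] refl)+
          using ax by (simp add: field_simps power2_eq_square)
      qed
      have bx: "0 \<le> b x" "b x \<le> b t0" using pb[OF xI] bmono[OF x(2) t0] by auto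
      have "(c x)\<^sup>2 - (a x)\<^sup>2 \<le> 2 * (a x)\<^sup>2 * ((b x)\<^sup>2 + \<epsilon> (b x))" using V[OF xI] .
      also have "\<dots> \<le> 2 * (a x)\<^sup>2 * ((M + 1) * (b x)\<^sup>2)"
        using M[OF bx] by (intro mult_left_mono) (auto simp: algebra_simps)
      also have "\<dots> = (M + 1) * (b x)\<^sup>2 * (2 * (a x)\<^sup>2)" by simp
      also have "\<dots> \<le> (M + 1) * (b x)\<^sup>2 * ((a x)\<^sup>2 + (c x)\<^sup>2)"
        using U[OF xI] M0 by (intro mult_left_mono) auto
      finally show "0 \<le> ((M + 1) * (b x)\<^sup>2 * ((a x)\<^sup>2 + (c x)\<^sup>2) - ((c x)\<^sup>2 - (a x)\<^sup>2)) / 2" by simp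
    qed
    hence "ln (a t0) - (M + 1) / 2 * (b t0)\<^sup>2 \<le> ln (a t) - (M + 1) / 2 * (b t)\<^sup>2"
      by (simp add: h_def)
    moreover have "0 \<le> (M + 1) / 2 * (b t)\<^sup>2" using M0 by simp
    ultimately have "ln (a t0) - (M + 1) / 2 * (b t0)\<^sup>2 \<le> ln (a t)" by linarith
    hence "\<alpha> \<le> exp (ln (a t))" unfolding \<alpha>_def by simp
    thus ?thesis using pa[OF inI[OF tt t0]] by simp
  qed
  have bbound: "ln (b t) \<le> ln (b t0) + \<alpha>\<^sup>2 * (t - t0)" if tt: "t \<le> t0" for t
  proof -
    define k where "k x = ln (b x) - \<alpha>\<^sup>2 * x" for x
    have "0 * (t0 - t) \<le> k t0 - k t"
    proof (rule deriv_lower[OF tt, of k "\<lambda>x. ((a x)\<^sup>2 + (c x)\<^sup>2) / 2 - \<alpha>\<^sup>2"])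
      fix x assume x: "t \<le> x" "x \<le> t0"
      hence xI: "ereal x < \<eta>" using inI t0 by blast
      have bx: "b x > 0" using pb[OF xI] .
      show "(k has_real_derivative ((a x)\<^sup>2 + (c x)\<^sup>2) / 2 - \<alpha>\<^sup>2) (at x)"
      proof -
        have lb: "((\<lambda>x. ln (b x)) has_real_derivative (1 / b x) * (b x * ((a x)\<^sup>2 + (c x)\<^sup>2) / 2)) (at x)"
          by (rule DERIV_chain2[OF DERIV_ln_divide[OF bx] db[OF xI]])
        show ?thesis unfolding k_def[abs_def]
          apply (rule lb derivative_eq_intros refl)+
          using bx by (simp add: field_simps power2_eq_square)
      qed
      have "\<alpha>\<^sup>2 \<le> (a x)\<^sup>2" using aLow[OF x(2)] \<alpha>pos by (intro power_mono) auto
      thus "0 \<le> ((a x)\<^sup>2 + (c x)\<^sup>2) / 2 - \<alpha>\<^sup>2" using U[OF xI] by simp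
    qed
    thus ?thesis by (simp add: k_def algebra_simps)
  qed
  have blim: "(b \<longlongrightarrow> 0) at_bot"
  proof (rule order_tendstoI)
    fix e :: real assume e: "0 < e"
    define N where "N = min t0 (t0 + (ln e - ln (b t0)) / \<alpha>\<^sup>2 - 1)"
    show "eventually (\<lambda>x. b x < e) at_bot"
      unfolding eventually_at_bot_linorder
    proof (intro exI[of _ N] allI impI)
      fix t assume tN: "t \<le> N"
      hence tt: "t \<le> t0" by (simp add: N_def)
      have "t - t0 \<le> (ln e - ln (b t0)) / \<alpha>\<^sup>2 - 1" using tN by (simp add: N_def)
      hence "\<alpha>\<^sup>2 * (t - t0) \<le> \<alpha>\<^sup>2 * ((ln e - ln (b t0)) / \<alpha>\<^sup>2 - 1)"
        using \<alpha>pos by (intro mult_left_mono) auto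
      also have "\<dots> = ln e - ln (b t0) - \<alpha>\<^sup>2" using \<alpha>pos by (simp add: field_simps)
      moreover have "\<alpha>\<^sup>2 > 0" using \<alpha>pos by simp
      ultimately have "ln (b t) < ln e" using bbound[OF tt] by linarith
      thus "b t < e" using e pb[OF inI[OF tt t0]] by simp
    qed
  next
    fix e :: real assume "e < 0"
    thus "eventually (\<lambda>x. e < b x) at_bot"
      unfolding eventually_at_bot_linorder
      by (intro exI[of _ t0] allI impI) (metis inI t0 pb less_trans)
  qed
  define q where "q = Inf (a ` {..t0})"
  have bdd: "bdd_below (a ` {..t0})" using aLow by (auto intro!: bdd_belowI[of _ \<alpha>])
  have qa: "q \<le> a t" if "t \<le> t0" for t
    unfolding q_def using bdd that by (intro cInf_lower) auto
  have qpos: "q \<ge> \<alpha>" unfolding q_def by (rule cInf_greatest) (use aLow in auto)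
  have alim: "(a \<longlongrightarrow> q) at_bot"
  proof (rule decreasing_tendsto)
    show "eventually (\<lambda>n. q \<le> a n) at_bot"
      unfolding eventually_at_bot_linorder by (intro exI[of _ t0]) (use qa in auto)
    fix x assume "q < x"
    then obtain s where s: "s \<le> t0" "a s < x" using cInf_lessD[of "a ` {..t0}" x] unfolding q_def by auto
    show "eventually (\<lambda>n. a n < x) at_bot"
      unfolding eventually_at_bot_linorder
      by (intro exI[of _ s] allI impI) (meson amono inI le_less_trans s t0)
  qed
  have elim: "((\<lambda>t. \<epsilon> (b t)) \<longlongrightarrow> 0) at_bot"
    using isCont_tendsto_compose[OF DERIV_isCont[OF de[of 0]] blim] e0 by simp
  have ulim: "((\<lambda>t. a t * sqrt (1 + 2 * ((b t)\<^sup>2 + \<epsilon> (b t)))) \<longlongrightarrow> q * sqrt (1 + 2 * (0\<^sup>2 + 0))) at_bot"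
    by (rule tendsto_mult[OF alim tendsto_real_sqrt[OF tendsto_add[OF tendsto_const
          tendsto_mult[OF tendsto_const tendsto_add[OF tendsto_power[OF blim] elim]]]]])
  have clim: "(c \<longlongrightarrow> q) at_bot"
  proof (rule tendsto_sandwich[OF _ _ alim])
    show "eventually (\<lambda>t. a t \<le> c t) at_bot"
      unfolding eventually_at_bot_linorder
    proof (intro exI[of _ t0] allI impI)
      fix t assume "t \<le> t0" hence tI: "ereal t < \<eta>" using inI t0 by blast
      have "(a t)\<^sup>2 \<le> (c t)\<^sup>2" using U[OF tI] by simp
      thus "a t \<le> c t" using power2_le_imp_le less_imp_le[OF pc[OF tI]] by blast
    qed
    show "eventually (\<lambda>t. c t \<le> a t * sqrt (1 + 2 * ((b t)\<^sup>2 + \<epsilon> (b t)))) at_bot"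
      unfolding eventually_at_bot_linorder
    proof (intro exI[of _ t0] allI impI)
      fix t assume "t \<le> t0" hence tI: "ereal t < \<eta>" using inI t0 by blast
      have "(c t)\<^sup>2 \<le> (a t)\<^sup>2 * (1 + 2 * ((b t)\<^sup>2 + \<epsilon> (b t)))" using V[OF tI] by (simp add: algebra_simps)
      hence "c t \<le> sqrt ((a t)\<^sup>2 * (1 + 2 * ((b t)\<^sup>2 + \<epsilon> (b t))))" by (rule real_le_rsqrt)
      also have "\<dots> = a t * sqrt (1 + 2 * ((b t)\<^sup>2 + \<epsilon> (b t)))"
        using pa[OF tI] by (simp add: real_sqrt_mult)
      finally show "c t \<le> a t * sqrt (1 + 2 * ((b t)\<^sup>2 + \<epsilon> (b t)))" .
    qed
    show "((\<lambda>t. a t * sqrt (1 + 2 * ((b t)\<^sup>2 + \<epsilon> (b t)))) \<longlongrightarrow> q) at_bot" using ulim by simp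
  qed
  have "q > 0" using qpos \<alpha>pos by simp
  thus ?thesis using U V alim blim clim by blast
qed


theorem proposition7p2:
  fixes \<epsilon> a b c :: "real \<Rightarrow> real" and \<xi> \<eta> :: ereal and t0 :: real
  assumes "admissible_eps \<epsilon>"
    and "maximal_sol \<epsilon> a b c \<xi> \<eta>"
    and "t0 \<in> eint \<xi> \<eta>"
  defines "P1 \<equiv> \<xi> \<noteq> -\<infinity> \<and>
      (\<integral>\<^sup>+ t \<in> {real_of_ereal \<xi><..t0}. ennreal (a t * b t * c t) \<partial>lborel) < \<infinity>"
    and "P2 \<equiv> \<xi> = -\<infinity> \<and>
      (\<forall>t\<in>eint \<xi> \<eta>. 0 \<le> (c t)\<^sup>2 - (a t)\<^sup>2 \<and>
          (c t)\<^sup>2 - (a t)\<^sup>2 \<le> 2 * (a t)\<^sup>2 * ((b t)\<^sup>2 + \<epsilon> (b t))) \<and>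
      (\<exists>q>0. (a \<longlongrightarrow> q) at_bot \<and> (b \<longlongrightarrow> 0) at_bot \<and> (c \<longlongrightarrow> q) at_bot)"
  shows "(P1 \<or> P2) \<and> \<not> (P1 \<and> P2)"
proof -
  have xe: "\<xi> < \<eta>" and solI: "is_sol \<epsilon> a b c (eint \<xi> \<eta>)"
    using assms(2) unfolding maximal_sol_def by auto
  show ?thesis
  proof (cases \<xi> rule: ereal_cases)
    case (real x0)
    have "P1" unfolding P1_def
      using case_fin[OF solI[unfolded real] assms(3)[unfolded real]] real by simp
    moreover have "\<not> P2" unfolding P2_def using real by simp
    ultimately show ?thesis by blast
  next
    case PInf
    thus ?thesis using xe by simp
  next
    case MInf
    have e: "eint \<xi> \<eta> = {t. ereal t < \<eta>}" using MInf by (auto simp: eint_def)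
    have t0: "ereal t0 < \<eta>" using assms(3) e by simp
    have "P2" unfolding P2_def
      using case_minf[OF assms(1) solI[unfolded e] t0] MInf e by simp
    moreover have "\<not> P1" unfolding P1_def using MInf by simp
    ultimately show ?thesis by blast
  qed
qed

end
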